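(* Let $M=\langle n_1,n_2,n_3\rangle$ be a numerical monoid of embedding dimension three with minimal generators $n_1<n_2<n_3$. Then: (1) There exists $x\in M$ with $L(x+n_1)\neq L(x)+1$ if and only if $L(\alpha(M)n_2)\neq L(\alpha(M)n_2-n_1)+1$. (2) There exists $x\in M$ with $\ell(x+n_3)\neq \ell(x)+1$ if and only if $\ell(\beta(M)n_2)\neq \ell(\beta(M)n_2-n_3)+1$.
   Context: $\mathbb{N}$ denotes the nonnegative integers. A numerical monoid is a submonoid of $\mathbb{N}$ with finite complement. For $x\in M$, $\mathsf{Z}(x)=\{(a_1,a_2,a_3)\in\mathbb{N}^3\mid a_1n_1+a_2n_2+a_3n_3=x\}$; the length of a factorization is $a_1+a_2+a_3$; $L(x)$ and $\ell(x)$ are the maximum and minimum factorization lengths of $x$. Define $\alpha(M)=\min\{b\in\mathbb{N}\mid bn_2-n_1\in M\}$ and $\beta(M)=\min\{b\in\mathbb{N}\mid bn_2-n_3\in M\}$. *)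

theory Defs
  imports Main
begin

definition mon3 :: "nat \<Rightarrow> nat \<Rightarrow> nat \<Rightarrow> nat set" where
  "mon3 n1 n2 n3 = {a1 * n1 + a2 * n2 + a3 * n3 | a1 a2 a3. True}"

definition numerical_monoid :: "nat set \<Rightarrow> bool" where
  "numerical_monoid M \<longleftrightarrow> 0 \<in> M \<and> (\<forall>x\<in>M. \<forall>y\<in>M. x + y \<in> M) \<and> finite (UNIV - M)"

definition minimal_gens3 :: "nat \<Rightarrow> nat \<Rightarrow> nat \<Rightarrow> bool" where
  "minimal_gens3 n1 n2 n3 \<longleftrightarrow>
     0 < n1 \<and> n1 < n2 \<and> n2 < n3 \<and>
     n1 \<notin> {a * n2 + b * n3 | a b. True} \<and>
     n2 \<notin> {a * n1 + b * n3 | a b. True} \<and>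
     n3 \<notin> {a * n1 + b * n2 | a b. True}"

definition Zf :: "nat \<Rightarrow> nat \<Rightarrow> nat \<Rightarrow> nat \<Rightarrow> (nat \<times> nat \<times> nat) set" where
  "Zf n1 n2 n3 x = {(a1, a2, a3). a1 * n1 + a2 * n2 + a3 * n3 = x}"

definition lengths :: "nat \<Rightarrow> nat \<Rightarrow> nat \<Rightarrow> nat \<Rightarrow> nat set" where
  "lengths n1 n2 n3 x = (\<lambda>(a1, a2, a3). a1 + a2 + a3) ` Zf n1 n2 n3 x"

definition Lmax :: "nat \<Rightarrow> nat \<Rightarrow> nat \<Rightarrow> nat \<Rightarrow> nat" where
  "Lmax n1 n2 n3 x = Max (lengths n1 n2 n3 x)"

definition lmin :: "nat \<Rightarrow> nat \<Rightarrow> nat \<Rightarrow> nat \<Rightarrow> nat" where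
  "lmin n1 n2 n3 x = Min (lengths n1 n2 n3 x)"

text \<open>alpha(M) = min { b | b n2 - n1 \<in> M }, beta(M) = min { b | b n2 - n3 \<in> M };
  the differences are integers and membership in M \<subseteq> N forces them to be
  nonnegative.\<close>
definition alphaM :: "nat \<Rightarrow> nat \<Rightarrow> nat \<Rightarrow> nat" where
  "alphaM n1 n2 n3 = (LEAST b. \<exists>m \<in> mon3 n1 n2 n3. int b * int n2 - int n1 = int m)"

definition betaM :: "nat \<Rightarrow> nat \<Rightarrow> nat \<Rightarrow> nat" where
  "betaM n1 n2 n3 = (LEAST b. \<exists>m \<in> mon3 n1 n2 n3. int b * int n2 - int n3 = int m)"

end

theory Submission
  imports Defs
begin

lemma Zf_iff: "(a1,a2,a3) \<in> Zf n1 n2 n3 x \<longleftrightarrow> a1*n1+a2*n2+a3*n3 = x"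
  by (simp add: Zf_def)

lemma mon3_iff: "x \<in> mon3 n1 n2 n3 \<longleftrightarrow> (\<exists>a1 a2 a3. a1*n1+a2*n2+a3*n3 = x)"
  by (auto simp: mon3_def)

lemma fin_lengths:
  assumes "0<n1" "0<n2" "0<n3"
  shows "finite (lengths n1 n2 n3 x)"
proof -
  have "Zf n1 n2 n3 x \<subseteq> {..x} \<times> {..x} \<times> {..x}"
  proof
    fix t assume "t \<in> Zf n1 n2 n3 x"
    then obtain a1 a2 a3 where t: "t = (a1,a2,a3)" and e: "a1*n1+a2*n2+a3*n3 = x"
      by (cases t) (auto simp: Zf_def)
    have "a1 \<le> a1*n1" "a2 \<le> a2*n2" "a3 \<le> a3*n3" using assms by simp_all
    then have "a1 \<le> x" "a2 \<le> x" "a3 \<le> x" using e by linarith+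
    then show "t \<in> {..x} \<times> {..x} \<times> {..x}" using t by auto
  qed
  then have "finite (Zf n1 n2 n3 x)" by (rule finite_subset) simp
  then show ?thesis unfolding lengths_def by simp
qed

lemma len_mem: "a1*n1+a2*n2+a3*n3 = x \<Longrightarrow> a1+a2+a3 \<in> lengths n1 n2 n3 x"
  unfolding lengths_def by (rule rev_image_eqI[of "(a1,a2,a3)"]) (simp_all add: Zf_def)

lemma len_obtain: "l \<in> lengths n1 n2 n3 x \<Longrightarrow> \<exists>a1 a2 a3. a1*n1+a2*n2+a3*n3 = x \<and> l = a1+a2+a3"
  unfolding lengths_def Zf_def by auto

lemma Lmax_ge:
  assumes "0<n1" "0<n2" "0<n3" "a1*n1+a2*n2+a3*n3 = x"
  shows "a1+a2+a3 \<le> Lmax n1 n2 n3 x"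
  unfolding Lmax_def using fin_lengths[OF assms(1-3)] len_mem[OF assms(4)] by simp

lemma lmin_le:
  assumes "0<n1" "0<n2" "0<n3" "a1*n1+a2*n2+a3*n3 = x"
  shows "lmin n1 n2 n3 x \<le> a1+a2+a3"
  unfolding lmin_def using fin_lengths[OF assms(1-3)] len_mem[OF assms(4)] by simp

lemma Lmax_ex:
  assumes "0<n1" "0<n2" "0<n3" "x \<in> mon3 n1 n2 n3"
  shows "\<exists>a1 a2 a3. a1*n1+a2*n2+a3*n3 = x \<and> a1+a2+a3 = Lmax n1 n2 n3 x"
proof -
  obtain a1 a2 a3 where "a1*n1+a2*n2+a3*n3 = x" using assms(4) mon3_iff by blast
  then have ne: "lengths n1 n2 n3 x \<noteq> {}" using len_mem by blast
  have "Lmax n1 n2 n3 x \<in> lengths n1 n2 n3 x"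
    unfolding Lmax_def using fin_lengths[OF assms(1-3)] ne by (rule Max_in)
  from len_obtain[OF this] obtain a1 a2 a3 where "a1*n1+a2*n2+a3*n3 = x" "Lmax n1 n2 n3 x = a1+a2+a3" by blast
  then show ?thesis by metis
qed

lemma lmin_ex:
  assumes "0<n1" "0<n2" "0<n3" "x \<in> mon3 n1 n2 n3"
  shows "\<exists>a1 a2 a3. a1*n1+a2*n2+a3*n3 = x \<and> a1+a2+a3 = lmin n1 n2 n3 x"
proof -
  obtain a1 a2 a3 where "a1*n1+a2*n2+a3*n3 = x" using assms(4) mon3_iff by blast
  then have ne: "lengths n1 n2 n3 x \<noteq> {}" using len_mem by blast
  have "lmin n1 n2 n3 x \<in> lengths n1 n2 n3 x"
    unfolding lmin_def using fin_lengths[OF assms(1-3)] ne by (rule Min_in)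
  from len_obtain[OF this] obtain a1 a2 a3 where "a1*n1+a2*n2+a3*n3 = x" "lmin n1 n2 n3 x = a1+a2+a3" by blast
  then show ?thesis by metis
qed

lemma wit_ex:
  assumes "numerical_monoid (mon3 n1 n2 n3)" "0 < n2"
  shows "\<exists>b. \<exists>m \<in> mon3 n1 n2 n3. int b * int n2 - int y = int m"
proof -
  have "finite (UNIV - mon3 n1 n2 n3)" using assms(1) by (simp add: numerical_monoid_def)
  then have "\<exists>N. \<forall>z\<in>UNIV - mon3 n1 n2 n3. z < N" by (simp only: finite_nat_set_iff_bounded)
  then obtain N where N: "\<forall>z\<in>UNIV - mon3 n1 n2 n3. z < N" by blast
  define b where "b = y + N"
  have "b * n2 \<ge> b" using assms(2) by simp
  then have ge: "b*n2 - y \<ge> N" "b*n2 \<ge> y" unfolding b_def by linarith+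
  have "b*n2 - y \<in> mon3 n1 n2 n3"
  proof (rule ccontr)
    assume "b*n2 - y \<notin> mon3 n1 n2 n3"
    then have "b*n2 - y < N" using N by blast
    then show False using ge by simp
  qed
  moreover have "int b * int n2 - int y = int (b*n2 - y)" using ge by (simp add: of_nat_diff)
  ultimately show ?thesis by blast
qed

lemma core1:
  fixes n1 n2 n3 b2 b3 c1 c2 c3 :: nat
  assumes "0<n1" "n1<n2" "n2<n3"
    and e: "b2*n2+b3*n3 = (c1+1)*n1 + c2*n2 + c3*n3"
    and l: "b2+b3 \<ge> c1+c2+c3+2"
  shows "\<exists>k\<le>b2. \<exists>m \<in> mon3 n1 n2 n3. int k * int n2 - int n1 = int m"
proof (cases "b3 \<ge> c3")
  case True
  define B where "B = b3 - c3"
  have e2: "b2*n2 + B*n3 = (c1+1)*n1 + c2*n2" using e True unfolding B_def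
    by (simp add: diff_mult_distrib)
  show ?thesis
  proof (cases "b2 \<ge> c2")
    case True
    define A where "A = b2 - c2"
    have e3: "A*n2 + B*n3 = (c1+1)*n1" using e2 True unfolding A_def
      by (simp add: diff_mult_distrib)
    have "A + B \<ge> c1+2" using l True \<open>b3 \<ge> c3\<close> unfolding A_def B_def by linarith
    then have "(c1+2)*n2 \<le> (A+B)*n2" by (rule mult_right_mono) simp
    also have "\<dots> \<le> A*n2 + B*n3" using assms(3) by (simp add: distrib_right)
    finally have "(c1+2)*n2 \<le> (c1+1)*n1" using e3 by simp
    moreover have "(c1+1)*n1 < (c1+2)*n2"
    proof -
      have "(c1+1)*n1 \<le> (c1+1)*n2" using assms(2) by (intro mult_left_mono) simp_all
      moreover have "(c1+2)*n2 = (c1+1)*n2 + n2" by simp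
      ultimately show ?thesis using assms by linarith
    qed
    ultimately show ?thesis by simp
  next
    case False
    define A where "A = c2 - b2"
    have e3: "B*n3 = (c1+1)*n1 + A*n2" using e2 False unfolding A_def
      by (simp add: diff_mult_distrib)
    have "B \<ge> c1+1+A+1" using l False \<open>b3 \<ge> c3\<close> unfolding A_def B_def by linarith
    then have "(c1+1+A+1)*n3 \<le> B*n3" by (rule mult_right_mono) simp
    moreover have "(c1+1)*n1 + A*n2 < (c1+1+A+1)*n3"
    proof -
      have "(c1+1)*n1 \<le> (c1+1)*n3" using assms by (intro mult_left_mono) simp_all
      moreover have "A*n2 \<le> A*n3" using assms by simp
      moreover have "(c1+1+A+1)*n3 = (c1+1)*n3 + A*n3 + n3" by (simp add: distrib_right)
      ultimately show ?thesis using assms by linarith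
    qed
    ultimately show ?thesis using e3 by simp
  qed
next
  case False
  define C where "C = c3 - b3"
  have e2: "b2*n2 = (c1+1)*n1 + c2*n2 + C*n3" using e False unfolding C_def
    by (simp add: diff_mult_distrib)
  have "c2*n2 \<le> b2*n2" using e2 by simp
  then have "c2 \<le> b2" using assms by simp
  define k where "k = b2 - c2"
  have e3: "k*n2 = n1 + (c1*n1 + 0*n2 + C*n3)" using e2 \<open>c2 \<le> b2\<close> unfolding k_def
    by (simp add: diff_mult_distrib)
  have "c1*n1 + 0*n2 + C*n3 \<in> mon3 n1 n2 n3" using mon3_iff by blast
  moreover have "int k * int n2 - int n1 = int (c1*n1 + 0*n2 + C*n3)"
    using arg_cong[OF e3, of int] by simp
  moreover have "k \<le> b2" unfolding k_def by simp
  ultimately show ?thesis by blast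
qed

lemma core2:
  fixes n1 n2 n3 b1 b2 c1 c2 c3 :: nat
  assumes "0<n1" "n1<n2" "n2<n3"
    and e: "b1*n1+b2*n2 = c1*n1 + c2*n2 + (c3+1)*n3"
    and l: "b1+b2 \<le> c1+c2+c3"
  shows "\<exists>k\<le>b2. \<exists>m \<in> mon3 n1 n2 n3. int k * int n2 - int n3 = int m"
proof (cases "b1 \<ge> c1")
  case True
  define A where "A = b1 - c1"
  have e2: "A*n1 + b2*n2 = c2*n2 + (c3+1)*n3" using e True unfolding A_def
    by (simp add: diff_mult_distrib)
  show ?thesis
  proof (cases "b2 \<ge> c2")
    case True
    define B where "B = b2 - c2"
    have e3: "A*n1 + B*n2 = (c3+1)*n3" using e2 True unfolding B_def
      by (simp add: diff_mult_distrib)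
    have "A + B \<le> c3" using l True \<open>b1 \<ge> c1\<close> unfolding A_def B_def by linarith
    have "A*n1 + B*n2 \<le> (A+B)*n2" using assms by (simp add: distrib_right)
    also have "\<dots> \<le> c3*n2" using \<open>A + B \<le> c3\<close> by (rule mult_right_mono) simp
    also have "\<dots> < (c3+1)*n3"
    proof -
      have "c3*n2 \<le> c3*n3" using assms by simp
      moreover have "(c3+1)*n3 = c3*n3 + n3" by simp
      ultimately show ?thesis using assms by linarith
    qed
    finally show ?thesis using e3 by simp
  next
    case False
    define B where "B = c2 - b2"
    have e3: "A*n1 = B*n2 + (c3+1)*n3" using e2 False unfolding B_def
      by (simp add: diff_mult_distrib)
    have "A \<le> B + c3" using l False \<open>b1 \<ge> c1\<close> unfolding A_def B_def by linarith
    then have "A*n1 \<le> (B+c3)*n1" by (rule mult_right_mono) simp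
    moreover have "(B+c3)*n1 < B*n2 + (c3+1)*n3"
    proof -
      have "B*n1 \<le> B*n2" using assms by simp
      moreover have "c3*n1 \<le> c3*n3" using assms by simp
      moreover have "(c3+1)*n3 = c3*n3+n3" "(B+c3)*n1 = B*n1+c3*n1" by (simp_all add: distrib_right)
      ultimately show ?thesis using assms by linarith
    qed
    ultimately show ?thesis using e3 by simp
  qed
next
  case False
  define C where "C = c1 - b1"
  have "c1*n1 = C*n1 + b1*n1" unfolding C_def using False by (simp add: add_mult_distrib[symmetric])
  then have e2: "b2*n2 = C*n1 + c2*n2 + (c3+1)*n3" using e by linarith
  have "c2*n2 \<le> b2*n2" using e2 by simp
  then have "c2 \<le> b2" using assms by simp
  define k where "k = b2 - c2"
  have e3: "k*n2 = n3 + (C*n1 + 0*n2 + c3*n3)" using e2 \<open>c2 \<le> b2\<close> unfolding k_def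
    by (simp add: diff_mult_distrib)
  have "C*n1 + 0*n2 + c3*n3 \<in> mon3 n1 n2 n3" using mon3_iff by blast
  moreover have "int k * int n2 - int n3 = int (C*n1 + 0*n2 + c3*n3)"
    using arg_cong[OF e3, of int] by simp
  moreover have "k \<le> b2" unfolding k_def by simp
  ultimately show ?thesis by blast
qed

theorem mainTheorem5:
  fixes n1 n2 n3 :: nat
  assumes "numerical_monoid (mon3 n1 n2 n3)"
    and "minimal_gens3 n1 n2 n3"
  shows "((\<exists>x \<in> mon3 n1 n2 n3. Lmax n1 n2 n3 (x + n1) \<noteq> Lmax n1 n2 n3 x + 1)
            \<longleftrightarrow> Lmax n1 n2 n3 (alphaM n1 n2 n3 * n2)
                  \<noteq> Lmax n1 n2 n3 (alphaM n1 n2 n3 * n2 - n1) + 1)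
       \<and> ((\<exists>x \<in> mon3 n1 n2 n3. lmin n1 n2 n3 (x + n3) \<noteq> lmin n1 n2 n3 x + 1)
            \<longleftrightarrow> lmin n1 n2 n3 (betaM n1 n2 n3 * n2)
                  \<noteq> lmin n1 n2 n3 (betaM n1 n2 n3 * n2 - n3) + 1)"
proof -
  let ?M = "mon3 n1 n2 n3"
  let ?L = "Lmax n1 n2 n3" and ?l = "lmin n1 n2 n3"
  have p: "0<n1" "n1<n2" "n2<n3" using assms(2) by (auto simp: minimal_gens3_def)
  then have p2: "0<n2" "0<n3" by simp_all
  define \<alpha> where "\<alpha> = alphaM n1 n2 n3"
  define \<beta> where "\<beta> = betaM n1 n2 n3"
  have "\<exists>m\<in>?M. int \<alpha> * int n2 - int n1 = int m"
    unfolding \<alpha>_def alphaM_def by (rule LeastI_ex) (rule wit_ex[OF assms(1) p2(1)])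
  then obtain m1 where m1: "m1 \<in> ?M" "int \<alpha> * int n2 - int n1 = int m1" by blast
  then have "int (\<alpha>*n2) = int (m1 + n1)" by simp
  then have "\<alpha>*n2 = m1 + n1" by (simp only: of_nat_eq_iff)
  note m1 = m1(1) this
  have "\<exists>m\<in>?M. int \<beta> * int n2 - int n3 = int m"
    unfolding \<beta>_def betaM_def by (rule LeastI_ex) (rule wit_ex[OF assms(1) p2(1)])
  then obtain m3 where m3: "m3 \<in> ?M" "int \<beta> * int n2 - int n3 = int m3" by blast
  then have "int (\<beta>*n2) = int (m3 + n3)" by simp
  then have "\<beta>*n2 = m3 + n3" by (simp only: of_nat_eq_iff)
  note m3 = m3(1) this
  have P1: "(\<exists>x \<in> ?M. ?L (x + n1) \<noteq> ?L x + 1) \<longleftrightarrow> ?L (\<alpha> * n2) \<noteq> ?L (\<alpha> * n2 - n1) + 1"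
  proof
    assume "\<exists>x \<in> ?M. ?L (x + n1) \<noteq> ?L x + 1"
    then obtain x where x: "x \<in> ?M" "?L (x + n1) \<noteq> ?L x + 1" by blast
    show "?L (\<alpha> * n2) \<noteq> ?L (\<alpha> * n2 - n1) + 1"
    proof
      assume eqA: "?L (\<alpha> * n2) = ?L (\<alpha> * n2 - n1) + 1"
      obtain d1 d2 d3 where d: "d1*n1+d2*n2+d3*n3 = m1" "d1+d2+d3 = ?L m1"
        using Lmax_ex[OF p(1) p2 m1(1)] by blast
      have "0+\<alpha>+0 \<le> ?L (\<alpha>*n2)" by (rule Lmax_ge[OF p(1) p2]) simp
      then have aL: "\<alpha> \<le> d1+d2+d3+1" using eqA m1(2) d(2) by simp
      obtain c1 c2 c3 where c: "c1*n1+c2*n2+c3*n3 = x" "c1+c2+c3 = ?L x"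
        using Lmax_ex[OF p(1) p2 x(1)] by blast
      have "x + n1 = (c1+1)*n1 + c2*n2 + c3*n3" using c(1) by simp
      then have xM: "x + n1 \<in> ?M" unfolding mon3_iff by (intro exI) (rule sym)
      obtain b1 b2 b3 where b: "b1*n1+b2*n2+b3*n3 = x+n1" "b1+b2+b3 = ?L (x+n1)"
        using Lmax_ex[OF p(1) p2 xM] by blast
      have "(c1+1)+c2+c3 \<le> ?L (x+n1)" by (rule Lmax_ge[OF p(1) p2]) (use c in simp)
      then have ge2: "?L (x+n1) \<ge> ?L x + 2" using x(2) c(2) by simp
      show False
      proof (cases "b1 = 0")
        case False
        have "b1*n1 = (b1-1)*n1 + n1" using False by (cases b1) simp_all
        then have "(b1-1)*n1+b2*n2+b3*n3 = x" using b(1) by linarith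
        then have "(b1-1)+b2+b3 \<le> ?L x" by (rule Lmax_ge[OF p(1) p2])
        then show False using ge2 b(2) False by simp
      next
        case True
        have e: "b2*n2+b3*n3 = (c1+1)*n1 + c2*n2 + c3*n3" using b(1) c(1) True by simp
        obtain k where k: "k \<le> b2" "\<exists>m \<in> ?M. int k * int n2 - int n1 = int m"
          using core1[OF p e] ge2 b(2) c(2) True by fastforce
        have "\<alpha> \<le> k" unfolding \<alpha>_def alphaM_def by (rule Least_le) (rule k(2))
        then have "\<alpha> \<le> b2" using k(1) by linarith
        then have ab: "b2*n2 = (b2-\<alpha>)*n2 + \<alpha>*n2"
          by (simp add: add_mult_distrib[symmetric])
        have "d1*n1 + (b2-\<alpha>+d2)*n2 + (b3+d3)*n3 = x"
          using ab b(1) True d(1) m1(2) by (simp add: distrib_right)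
        then have "d1 + (b2-\<alpha>+d2) + (b3+d3) \<le> ?L x" by (rule Lmax_ge[OF p(1) p2])
        then show False using aL ge2 b(2) True \<open>\<alpha> \<le> k\<close> k(1) by linarith
      qed
    qed
  next
    assume "?L (\<alpha> * n2) \<noteq> ?L (\<alpha> * n2 - n1) + 1"
    then show "\<exists>x \<in> ?M. ?L (x + n1) \<noteq> ?L x + 1" using m1 by (intro bexI[of _ m1]) simp_all
  qed
  have P2: "(\<exists>x \<in> ?M. ?l (x + n3) \<noteq> ?l x + 1) \<longleftrightarrow> ?l (\<beta> * n2) \<noteq> ?l (\<beta> * n2 - n3) + 1"
  proof
    assume "\<exists>x \<in> ?M. ?l (x + n3) \<noteq> ?l x + 1"
    then obtain x where x: "x \<in> ?M" "?l (x + n3) \<noteq> ?l x + 1" by blast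
    show "?l (\<beta> * n2) \<noteq> ?l (\<beta> * n2 - n3) + 1"
    proof
      assume eqB: "?l (\<beta> * n2) = ?l (\<beta> * n2 - n3) + 1"
      obtain d1 d2 d3 where d: "d1*n1+d2*n2+d3*n3 = m3" "d1+d2+d3 = ?l m3"
        using lmin_ex[OF p(1) p2 m3(1)] by blast
      have "?l (\<beta>*n2) \<le> 0+\<beta>+0" by (rule lmin_le[OF p(1) p2]) simp
      then have bL: "d1+d2+d3+1 \<le> \<beta>" using eqB m3(2) d(2) by simp
      obtain c1 c2 c3 where c: "c1*n1+c2*n2+c3*n3 = x" "c1+c2+c3 = ?l x"
        using lmin_ex[OF p(1) p2 x(1)] by blast
      have "x + n3 = c1*n1 + c2*n2 + (c3+1)*n3" using c(1) by simp
      then have xM: "x + n3 \<in> ?M" unfolding mon3_iff by (intro exI) (rule sym)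
      obtain b1 b2 b3 where b: "b1*n1+b2*n2+b3*n3 = x+n3" "b1+b2+b3 = ?l (x+n3)"
        using lmin_ex[OF p(1) p2 xM] by blast
      have "?l (x+n3) \<le> c1+c2+(c3+1)" by (rule lmin_le[OF p(1) p2]) (use c in simp)
      then have le: "?l (x+n3) \<le> ?l x" using x(2) c(2) by simp
      show False
      proof (cases "b3 = 0")
        case False
        have "b3*n3 = (b3-1)*n3 + n3" using False by (cases b3) simp_all
        then have "b1*n1+b2*n2+(b3-1)*n3 = x" using b(1) by linarith
        then have "?l x \<le> b1+b2+(b3-1)" by (rule lmin_le[OF p(1) p2])
        then show False using le b(2) False by simp
      next
        case True
        have e: "b1*n1+b2*n2 = c1*n1 + c2*n2 + (c3+1)*n3" using b(1) c(1) True by simp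
        obtain k where k: "k \<le> b2" "\<exists>m \<in> ?M. int k * int n2 - int n3 = int m"
          using core2[OF p e] le b(2) c(2) True by fastforce
        have "\<beta> \<le> k" unfolding \<beta>_def betaM_def by (rule Least_le) (rule k(2))
        then have "\<beta> \<le> b2" using k(1) by linarith
        then have ab: "b2*n2 = (b2-\<beta>)*n2 + \<beta>*n2"
          by (simp add: add_mult_distrib[symmetric])
        have "(b1+d1)*n1 + (b2-\<beta>+d2)*n2 + d3*n3 = x"
          using ab b(1) True d(1) m3(2) by (simp add: distrib_right)
        then have "?l x \<le> (b1+d1) + (b2-\<beta>+d2) + d3" by (rule lmin_le[OF p(1) p2])
        then show False using bL le b(2) True \<open>\<beta> \<le> k\<close> k(1) by linarith
      qed
    qed
  next
    assume "?l (\<beta> * n2) \<noteq> ?l (\<beta> * n2 - n3) + 1"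
    then show "\<exists>x \<in> ?M. ?l (x + n3) \<noteq> ?l x + 1" using m3 by (intro bexI[of _ m3]) simp_all
  qed
  show ?thesis using P1 P2 unfolding \<alpha>_def \<beta>_def by blast
qed

end
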